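(* Let $b,q,\lambda^i,\mu^i,\gamma^i$ ($i=1,\dots,n$) be smooth functions of $R^1,\dots,R^n$ with all $\mu^i$ nowhere zero, such that $q_i=\frac{\lambda^i}{\mu^i}b_i$ for all $i$ and, for all $i\ne j$, with $E_{ij}:=q(\mu^j-\mu^i)+b(\lambda^i-\lambda^j)+\gamma^i-\gamma^j$ nowhere zero and $K_{ij}:=\frac{\lambda^i-\lambda^j\mu^i/\mu^j}{E_{ij}}b_j$, $$\lambda^i_j=(\lambda^j-\lambda^i)K_{ij},\quad \mu^i_j=(\mu^j-\mu^i)K_{ij},\quad \gamma^i_j=(\gamma^j-\gamma^i)K_{ij},\quad b_{ij}=\frac{\lambda^i(1+\mu^j/\mu^i)-\lambda^j(1+\mu^i/\mu^j)}{E_{ij}}b_ib_j.$$ Then the functions $c^i:=\gamma^i+b\lambda^i-q\mu^i$ satisfy $\partial c^i/\partial R^j=0$ for $j\ne i$ and $E_{ij}=c^i-c^j$; locally there is a function $u$ with $u_i=\mu^ib_i$; and with $\phi^i:=\lambda^i/\mu^i$ one has, for all $i\ne j$, $$\phi^i_j=\frac{(\phi^j-\phi^i)^2}{c^j-c^i}u_j,\qquad u_{ij}=2\frac{\phi^j-\phi^i}{c^j-c^i}u_iu_j.$$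
   Context: Lower indices denote partial derivatives with respect to $R^1,\dots,R^n$. (This is the Gibbons-Tsarev system for hydrodynamic reductions of $\theta_{t\tilde t}+\theta_{z\tilde z}+\theta_{tx}\theta_{zy}-\theta_{ty}\theta_{zx}=0$ with $b=\theta_{zy}$, $q=\theta_{zx}$.) *)

theory Defs
  imports "HOL-Analysis.Analysis"
begin

text \<open>Points of the domain are R = (R^1,...,R^n), modelled as vectors in real^'n
  (the index type 'n is an arbitrary finite type with n = CARD('n) elements).\<close>

definition partial :: "(real^'n \<Rightarrow> real) \<Rightarrow> 'n \<Rightarrow> real^'n \<Rightarrow> real" where
  "partial f i x = deriv (\<lambda>t. f (x + t *\<^sub>R axis i 1)) 0"

fun iter_partial :: "'n list \<Rightarrow> (real^'n \<Rightarrow> real) \<Rightarrow> real^'n \<Rightarrow> real" where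
  "iter_partial [] f = f"
| "iter_partial (i # is) f = partial (iter_partial is f) i"

definition smooth_on :: "(real^'n) set \<Rightarrow> (real^'n \<Rightarrow> real) \<Rightarrow> bool" where
  "smooth_on U f \<longleftrightarrow> (\<forall>is. iter_partial is f differentiable_on U)"

definition Ecoef :: "(real^'n \<Rightarrow> real) \<Rightarrow> (real^'n \<Rightarrow> real) \<Rightarrow> ('n \<Rightarrow> real^'n \<Rightarrow> real)
    \<Rightarrow> ('n \<Rightarrow> real^'n \<Rightarrow> real) \<Rightarrow> ('n \<Rightarrow> real^'n \<Rightarrow> real) \<Rightarrow> 'n \<Rightarrow> 'n \<Rightarrow> real^'n \<Rightarrow> real" where
  "Ecoef b q lam mu gam i j x =
     q x * (mu j x - mu i x) + b x * (lam i x - lam j x) + gam i x - gam j x"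

definition Kcoef :: "(real^'n \<Rightarrow> real) \<Rightarrow> (real^'n \<Rightarrow> real) \<Rightarrow> ('n \<Rightarrow> real^'n \<Rightarrow> real)
    \<Rightarrow> ('n \<Rightarrow> real^'n \<Rightarrow> real) \<Rightarrow> ('n \<Rightarrow> real^'n \<Rightarrow> real) \<Rightarrow> 'n \<Rightarrow> 'n \<Rightarrow> real^'n \<Rightarrow> real" where
  "Kcoef b q lam mu gam i j x =
     (lam i x - lam j x * mu i x / mu j x) / Ecoef b q lam mu gam i j x * partial b j x"

end

theory Submission
  imports Defs
begin


lemma partial_has:
  fixes f :: "real^'n \<Rightarrow> real"
  assumes "(f has_derivative f') (at y)"
  shows "partial f i y = f' (axis i 1)"
proof -
  have l: "linear f'" using assms has_derivative_linear by blast
  have "((\<lambda>t. y + t *\<^sub>R axis i 1) has_derivative (\<lambda>s. s *\<^sub>R axis i 1)) (at 0)"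
    by (auto intro!: derivative_eq_intros)
  from has_derivative_compose[OF this, of f f'] assms
  have "((\<lambda>t. f (y + t *\<^sub>R axis i 1)) has_derivative (\<lambda>s. f' (s *\<^sub>R axis i 1))) (at 0)"
    by (simp add: o_def)
  moreover have "(\<lambda>s. f' (s *\<^sub>R axis i 1)) = (*) (f' (axis i 1))"
    using l by (auto simp add: linear_scale)
  ultimately have "((\<lambda>t. f (y + t *\<^sub>R axis i 1)) has_field_derivative f' (axis i 1)) (at 0)"
    by (simp add: has_field_derivative_def)
  then show ?thesis unfolding partial_def by (rule DERIV_imp_deriv)
qed

lemma lin_expand:
  fixes f' :: "real^'n \<Rightarrow> real"
  assumes "linear f'"
  shows "f' h = (\<Sum>j\<in>UNIV. f' (axis j 1) * h $ j)"
proof -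
  have "f' h = f' (\<Sum>j\<in>UNIV. h $ j *\<^sub>R axis j 1)"
    using basis_expansion[of h] by (simp add: scalar_mult_eq_scaleR)
  also have "\<dots> = (\<Sum>j\<in>UNIV. h $ j * f' (axis j 1))"
    using assms by (simp add: linear_sum linear_scale)
  finally show ?thesis by (simp add: mult.commute)
qed

lemma has_derivative_partials:
  fixes f :: "real^'n \<Rightarrow> real"
  assumes "f differentiable (at y)"
  shows "(f has_derivative (\<lambda>h. \<Sum>j\<in>UNIV. partial f j y * h $ j)) (at y)"
proof -
  obtain f' where d: "(f has_derivative f') (at y)" using assms differentiable_def by blast
  have "f' = (\<lambda>h. \<Sum>j\<in>UNIV. partial f j y * h $ j)"
  proof
    fix h
    have "f' h = (\<Sum>j\<in>UNIV. f' (axis j 1) * h $ j)" by (rule lin_expand[OF has_derivative_linear[OF d]])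
    also have "\<dots> = (\<Sum>j\<in>UNIV. partial f j y * h $ j)" by (simp only: partial_has[OF d])
    finally show "f' h = (\<Sum>j\<in>UNIV. partial f j y * h $ j)" .
  qed
  with d show ?thesis by simp
qed

lemma partial_cong:
  fixes f g :: "real^'n \<Rightarrow> real"
  assumes "open V" "y \<in> V" "\<forall>z\<in>V. f z = g z"
  shows "partial f i y = partial g i y"
proof -
  obtain e where e: "e > 0" "ball y e \<subseteq> V" using open_contains_ball_eq[OF assms(1)] assms(2) by blast
  have "eventually (\<lambda>t. f (y + t *\<^sub>R axis i 1) = g (y + t *\<^sub>R axis i 1)) (nhds 0)"
    unfolding eventually_nhds_metric
  proof (intro exI[of _ e] conjI allI impI)
    fix t :: real assume "dist t 0 < e"
    then have "y + t *\<^sub>R axis i 1 \<in> ball y e" by (simp add: dist_norm)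
    then have "y + t *\<^sub>R axis i 1 \<in> V" using e(2) by blast
    then show "f (y + t *\<^sub>R axis i 1) = g (y + t *\<^sub>R axis i 1)" using assms(3) by blast
  qed (rule e(1))
  then show ?thesis unfolding partial_def by (rule deriv_cong_ev) simp
qed

lemma partial_add:
  fixes f g :: "real^'n \<Rightarrow> real"
  assumes "f differentiable (at y)" "g differentiable (at y)"
  shows "partial (\<lambda>x. f x + g x) i y = partial f i y + partial g i y"
proof -
  obtain f' g' where d: "(f has_derivative f') (at y)" "(g has_derivative g') (at y)"
    using assms differentiable_def by blast
  have "((\<lambda>x. f x + g x) has_derivative (\<lambda>h. f' h + g' h)) (at y)"
    using d by (rule has_derivative_add)
  from partial_has[OF this] show ?thesis by (simp add: partial_has[OF d(1)] partial_has[OF d(2)])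
qed

lemma partial_diff:
  fixes f g :: "real^'n \<Rightarrow> real"
  assumes "f differentiable (at y)" "g differentiable (at y)"
  shows "partial (\<lambda>x. f x - g x) i y = partial f i y - partial g i y"
proof -
  obtain f' g' where d: "(f has_derivative f') (at y)" "(g has_derivative g') (at y)"
    using assms differentiable_def by blast
  have "((\<lambda>x. f x - g x) has_derivative (\<lambda>h. f' h - g' h)) (at y)"
    using d by (rule has_derivative_diff)
  from partial_has[OF this] show ?thesis by (simp add: partial_has[OF d(1)] partial_has[OF d(2)])
qed

lemma partial_mult:
  fixes f g :: "real^'n \<Rightarrow> real"
  assumes "f differentiable (at y)" "g differentiable (at y)"
  shows "partial (\<lambda>x. f x * g x) i y = partial f i y * g y + f y * partial g i y"
proof -
  obtain f' g' where d: "(f has_derivative f') (at y)" "(g has_derivative g') (at y)"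
    using assms differentiable_def by blast
  have "((\<lambda>x. f x * g x) has_derivative (\<lambda>h. f y * g' h + f' h * g y)) (at y)"
    using d by (rule has_derivative_mult)
  from partial_has[OF this] show ?thesis by (simp add: partial_has[OF d(1)] partial_has[OF d(2)])
qed

lemma partial_divide:
  fixes f g :: "real^'n \<Rightarrow> real"
  assumes "f differentiable (at y)" "g differentiable (at y)" "g y \<noteq> 0"
  shows "partial (\<lambda>x. f x / g x) i y = (partial f i y * g y - f y * partial g i y) / (g y)^2"
proof -
  obtain f' g' where d: "(f has_derivative f') (at y)" "(g has_derivative g') (at y)"
    using assms differentiable_def by blast
  from has_derivative_divide[OF d assms(3)]
  have "partial (\<lambda>x. f x / g x) i y = - f y * (inverse (g y) * g' (axis i 1) * inverse (g y)) + f' (axis i 1) / g y"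
    by (rule partial_has)
  also have "\<dots> = (partial f i y * g y - f y * partial g i y) / (g y)^2"
    using partial_has[OF d(1)] partial_has[OF d(2)] assms(3)
    by (simp add: field_simps power2_eq_square)
  finally show ?thesis .
qed

lemma iter_partial_snoc: "iter_partial (is @ [i]) f = iter_partial is (partial f i)"
  by (induction "is") auto

lemma iter_partial_cong:
  assumes "open V" "\<forall>z\<in>V. f z = g z"
  shows "\<forall>z\<in>V. iter_partial is f z = iter_partial is g z"
  by (induction "is") (use assms partial_cong in auto)

lemma diff_on_cong:
  fixes f g :: "real^'n \<Rightarrow> real"
  assumes "open V" "\<forall>z\<in>V. f z = g z" "f differentiable_on V"
  shows "g differentiable_on V"
  unfolding differentiable_on_eq_differentiable_at[OF assms(1)]
proof
  fix x assume x: "x \<in> V"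
  then obtain f' where "(f has_derivative f') (at x)"
    using assms differentiable_on_eq_differentiable_at differentiable_def by blast
  then have "(g has_derivative f') (at x)"
    by (rule has_derivative_transform_within_open[OF _ assms(1) x]) (use assms in auto)
  then show "g differentiable at x" using differentiable_def by blast
qed

definition SMk :: "nat \<Rightarrow> (real^'n) set \<Rightarrow> (real^'n \<Rightarrow> real) \<Rightarrow> bool" where
  "SMk k V f \<longleftrightarrow> (\<forall>is. length is \<le> k \<longrightarrow> iter_partial is f differentiable_on V)"

lemma smooth_SMk: "smooth_on V f \<longleftrightarrow> (\<forall>k. SMk k V f)"
  unfolding smooth_on_def SMk_def by auto

lemma SMk_partial: "SMk (Suc k) V f \<Longrightarrow> SMk k V (partial f i)"
  unfolding SMk_def
proof (intro allI impI)
  fix "is" :: "'a list"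
  assume a: "\<forall>is. length is \<le> Suc k \<longrightarrow> iter_partial is f differentiable_on V" and l: "length is \<le> k"
  then have "iter_partial (is @ [i]) f differentiable_on V" by simp
  then show "iter_partial is (partial f i) differentiable_on V" by (simp add: iter_partial_snoc)
qed

lemma SMk_mono: "k \<le> m \<Longrightarrow> SMk m V f \<Longrightarrow> SMk k V f"
  unfolding SMk_def by auto

lemma SMk_diff: "SMk k V f \<Longrightarrow> f differentiable_on V"
  unfolding SMk_def by (drule spec[of _ "[]"]) simp

lemma iter_add:
  fixes f g :: "real^'n \<Rightarrow> real"
  assumes "open V"
  shows "(\<forall>is. length is < length js \<longrightarrow> iter_partial is f differentiable_on V \<and> iter_partial is g differentiable_on V)
     \<Longrightarrow> \<forall>z\<in>V. iter_partial js (\<lambda>x. f x + g x) z = iter_partial js f z + iter_partial js g z"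
proof (induction js)
  case Nil then show ?case by simp
next
  case (Cons i js)
  have IH: "\<forall>z\<in>V. iter_partial js (\<lambda>x. f x + g x) z = iter_partial js f z + iter_partial js g z"
    using Cons by auto
  have df: "iter_partial js f differentiable_on V" and dg: "iter_partial js g differentiable_on V"
    using Cons.prems by auto
  show ?case
  proof
    fix z assume z: "z \<in> V"
    have "iter_partial (i # js) (\<lambda>x. f x + g x) z = partial (\<lambda>x. iter_partial js f x + iter_partial js g x) i z"
      using partial_cong[OF assms z IH] by simp
    also have "\<dots> = iter_partial (i # js) f z + iter_partial (i # js) g z"
      using partial_add df dg z assms differentiable_on_eq_differentiable_at by (simp, blast)
    finally show "iter_partial (i # js) (\<lambda>x. f x + g x) z = iter_partial (i # js) f z + iter_partial (i # js) g z" .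
  qed
qed

lemma SMk_add:
  fixes f g :: "real^'n \<Rightarrow> real"
  assumes "open V" "SMk k V f" "SMk k V g"
  shows "SMk k V (\<lambda>x. f x + g x)"
  unfolding SMk_def
proof (intro allI impI)
  fix js :: "'n list" assume l: "length js \<le> k"
  have eq: "\<forall>z\<in>V. iter_partial js f z + iter_partial js g z = iter_partial js (\<lambda>x. f x + g x) z"
    using iter_add[OF assms(1), of js f g] assms(2,3) l unfolding SMk_def by auto
  have "(\<lambda>x. iter_partial js f x + iter_partial js g x) differentiable_on V"
    using assms(2,3) l unfolding SMk_def by (auto intro!: differentiable_on_add)
  then show "iter_partial js (\<lambda>x. f x + g x) differentiable_on V"
    by (rule diff_on_cong[OF assms(1) eq])
qed

lemma SMk_mult:
  fixes f g :: "real^'n \<Rightarrow> real"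
  assumes "open V"
  shows "SMk k V f \<Longrightarrow> SMk k V g \<Longrightarrow> SMk k V (\<lambda>x. f x * g x)"
proof (induction k arbitrary: f g)
  case 0
  then have "(\<lambda>x. f x * g x) differentiable_on V"
    using SMk_diff by (auto intro!: differentiable_on_mult)
  then show ?case unfolding SMk_def by auto
next
  case (Suc k)
  have d0: "(\<lambda>x. f x * g x) differentiable_on V"
    using Suc.prems SMk_diff by (auto intro!: differentiable_on_mult)
  show ?case unfolding SMk_def
  proof (intro allI impI)
    fix "is" :: "'n list" assume l: "length is \<le> Suc k"
    show "iter_partial is (\<lambda>x. f x * g x) differentiable_on V"
    proof (cases "is" rule: rev_exhaust)
      case Nil then show ?thesis using d0 by simp
    next
      case (snoc js i)
      then have ljs: "length js \<le> k" using l by simp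
      let ?h = "\<lambda>x. partial f i x * g x + f x * partial g i x"
      have fk: "SMk k V f" and gk: "SMk k V g" using Suc.prems SMk_mono[of k "Suc k"] by auto
      have fik: "SMk k V (partial f i)" and gik: "SMk k V (partial g i)"
        using Suc.prems SMk_partial by auto
      have "SMk k V (\<lambda>x. partial f i x * g x)" by (rule Suc.IH[OF fik gk])
      moreover have "SMk k V (\<lambda>x. f x * partial g i x)" by (rule Suc.IH[OF fk gik])
      ultimately have sh: "SMk k V ?h" using SMk_add assms by blast
      have eq: "\<forall>z\<in>V. ?h z = partial (\<lambda>x. f x * g x) i z"
      proof
        fix z assume z: "z \<in> V"
        have "f differentiable (at z)" "g differentiable (at z)"
          using Suc.prems SMk_diff z differentiable_on_eq_differentiable_at[OF assms] by blast+
        then show "?h z = partial (\<lambda>x. f x * g x) i z" by (simp add: partial_mult)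
      qed
      have "iter_partial js ?h differentiable_on V" using sh ljs unfolding SMk_def by auto
      then have "iter_partial js (partial (\<lambda>x. f x * g x) i) differentiable_on V"
        by (rule diff_on_cong[OF assms iter_partial_cong[OF assms eq]])
      then show ?thesis using snoc by (simp add: iter_partial_snoc)
    qed
  qed
qed

lemma smooth_mult:
  fixes f g :: "real^'n \<Rightarrow> real"
  assumes "open V" "smooth_on V f" "smooth_on V g"
  shows "smooth_on V (\<lambda>x. f x * g x)"
  using SMk_mult[OF assms(1)] assms(2,3) unfolding smooth_SMk by blast

lemma smooth_partial: "smooth_on V f \<Longrightarrow> smooth_on V (partial f i)"
  unfolding smooth_SMk by (blast intro: SMk_partial)

lemma smooth_subset: "smooth_on U f \<Longrightarrow> V \<subseteq> U \<Longrightarrow> smooth_on V f"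
  unfolding smooth_on_def using differentiable_on_subset by blast

lemma smooth_diff_at: "smooth_on U f \<Longrightarrow> open U \<Longrightarrow> x \<in> U \<Longrightarrow> f differentiable (at x)"
  unfolding smooth_on_def by (drule spec[of _ "[]"]) (simp add: differentiable_on_eq_differentiable_at)



lemma alg1a:
  fixes mi mj li lj gi gj b q bj K :: real
  assumes "(q*(mj-mi) + b*(li-lj) + gi - gj) * K = (li - lj*mi/mj)*bj"
  shows "(gj - gi) * K + (b*((lj-li)*K) + bj*li) - (q*((mj-mi)*K) + lj/mj*bj*mi) = 0"
proof -
  have "(gj - gi) * K + (b*((lj-li)*K) + bj*li) - (q*((mj-mi)*K) + lj/mj*bj*mi)
     = (li - lj*mi/mj)*bj - (q*(mj-mi) + b*(li-lj) + gi - gj) * K"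
    by (simp add: algebra_simps)
  then show ?thesis using assms by simp
qed

lemma alg1:
  fixes mi mj li lj gi gj b q bj E :: real
  assumes "E \<noteq> 0" "E = q*(mj-mi) + b*(li-lj) + gi - gj"
  shows "(gj - gi) * ((li - lj*mi/mj)/E*bj) + (b*((lj-li)*((li - lj*mi/mj)/E*bj)) + bj*li)
         - (q*((mj-mi)*((li - lj*mi/mj)/E*bj)) + lj/mj*bj*mi) = 0"
  by (rule alg1a) (use assms in simp)

lemma alg2:
  fixes mi mj li lj bi bj E :: real
  assumes "mi \<noteq> 0" "mj \<noteq> 0" "E \<noteq> 0"
  shows "(mj - mi) * ((li - lj*mi/mj)/E*bj) * bi + mi * ((li*(1 + mj/mi) - lj*(1 + mi/mj))/E*bi*bj)
     = 2 * (mi*mj) * (li/mi - lj/mj) / E * bi * bj"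
  using assms by (simp add: field_simps)

lemma alg3:
  fixes mi mj li lj bj E :: real
  assumes "mi \<noteq> 0" "mj \<noteq> 0" "E \<noteq> 0"
  shows "(((lj - li) * ((li - lj*mi/mj)/E*bj)) * mi - li * ((mj - mi) * ((li - lj*mi/mj)/E*bj))) / mi^2
     = (lj/mj - li/mi)^2 / (- E) * (mj * bj)"
  using assms by (simp add: field_simps power2_eq_square)

lemma alg4:
  fixes mi mj li lj bi bj E :: real
  assumes "mi \<noteq> 0" "mj \<noteq> 0" "E \<noteq> 0"
  shows "2 * (mi*mj) * (li/mi - lj/mj) / E * bi * bj = 2 * (lj/mj - li/mi) / (-E) * (mi*bi) * (mj*bj)"
  using assms by (simp add: field_simps)

lemma alg5:
  fixes mi mj li lj bi bj E :: real
  assumes "mi \<noteq> 0" "mj \<noteq> 0" "E \<noteq> 0"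
  shows "2 * (mi*mj) * (li/mi - lj/mj) / E * bi * bj = 2 * (mj*mi) * (lj/mj - li/mi) / (-E) * bj * bi"
  using assms by (simp add: field_simps)


lemma poincare_ball:
  fixes w :: "'n \<Rightarrow> real^'n \<Rightarrow> real" and D :: "'n \<Rightarrow> 'n \<Rightarrow> real^'n \<Rightarrow> real"
  assumes dw: "\<And>i y. y \<in> ball a r \<Longrightarrow> (w i has_derivative (\<lambda>h. \<Sum>j\<in>UNIV. D i j y * h $ j)) (at y)"
   and cD: "\<And>i j. continuous_on (ball a r) (D i j)"
   and sym: "\<And>i j y. y \<in> ball a r \<Longrightarrow> D i j y = D j i y"
  shows "\<exists>u. \<forall>y\<in>ball a r. (u has_derivative (\<lambda>h. \<Sum>j\<in>UNIV. w j y * h $ j)) (at y)"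
proof -
  define V where "V = ball a r"
  define p where "p x t = a + t *\<^sub>R (x - a)" for x and t :: real
  have pV: "p x t \<in> V" if "x \<in> V" "t \<in> cbox 0 1" for x t
  proof -
    have "dist a (p x t) = \<bar>t\<bar> * norm (x - a)" by (simp add: p_def dist_norm)
    also have "\<dots> \<le> norm (x - a)" using that by (simp add: mult_left_le_one_le)
    also have "\<dots> < r" using that by (simp add: V_def dist_norm norm_minus_commute)
    finally show ?thesis by (simp add: V_def)
  qed
  have cw: "continuous_on V (w i)" for i
    using dw unfolding V_def
    by (meson continuous_at_imp_continuous_on has_derivative_continuous)
  define f where "f x t = (\<Sum>i\<in>UNIV. w i (p x t) * (x - a) $ i)" for x t
  define g where "g j x t = (\<Sum>i\<in>UNIV. t * D i j (p x t) * (x - a) $ i) + w j (p x t)" for j x t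
  define B where "B j = blinfun_inner_left (axis j (1::real))" for j :: 'n
  define fx where "fx x t = (\<Sum>j\<in>UNIV. g j x t *\<^sub>R B j)" for x t
  have Bapp: "blinfun_apply (B j) h = h $ j" for j h by (simp add: B_def inner_axis)
  have fxapp: "blinfun_apply (fx x t) h = (\<Sum>j\<in>UNIV. g j x t * h $ j)" for x t h
    by (simp add: fx_def blinfun.bilinear_simps Bapp)
  have cp: "continuous_on (V \<times> cbox 0 1) (\<lambda>z. p (fst z) (snd z))"
    unfolding p_def by (intro continuous_intros)
  have pV2: "(\<lambda>z. p (fst z) (snd z)) ` (V \<times> cbox 0 1) \<subseteq> V" using pV by auto
  have cDp: "continuous_on (V \<times> cbox 0 1) (\<lambda>z. D i j (p (fst z) (snd z)))" for i j
    by (rule continuous_on_compose2[OF cD[of i j, folded V_def] cp pV2])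
  have cwp: "continuous_on (V \<times> cbox 0 1) (\<lambda>z. w i (p (fst z) (snd z)))" for i
    by (rule continuous_on_compose2[OF cw[of i] cp pV2])
  have cg: "continuous_on (V \<times> cbox 0 1) (\<lambda>z. g j (fst z) (snd z))" for j
    unfolding g_def by (intro continuous_intros cDp cwp)
  have cfx: "continuous_on (V \<times> cbox 0 1) (\<lambda>(x, t). fx x t)"
    unfolding fx_def case_prod_beta by (intro continuous_intros cg)
  have cg1: "continuous_on (cbox 0 1) (g j x)" if "x \<in> V" for j x
  proof -
    have "continuous_on (cbox 0 1) (\<lambda>t. (x, t))" by (intro continuous_intros)
    moreover have "(\<lambda>t. (x, t)) ` cbox 0 1 \<subseteq> V \<times> cbox 0 1" using that by auto
    ultimately show ?thesis using continuous_on_compose2[OF cg[of j]] by fastforce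
  qed
  have cf1: "continuous_on (cbox 0 1) (f x)" if "x \<in> V" for x
  proof -
    have "continuous_on (cbox 0 1) (\<lambda>t. w i (p x t))" for i
    proof -
      have "continuous_on (cbox 0 1) (p x)" unfolding p_def by (intro continuous_intros)
      moreover have "p x ` cbox 0 1 \<subseteq> V" using that pV by auto
      ultimately show ?thesis using continuous_on_compose2[OF cw[of i]] by blast
    qed
    then show ?thesis unfolding f_def by (intro continuous_intros)
  qed
  have dfx: "((\<lambda>x. f x t) has_derivative blinfun_apply (fx x t)) (at x within V)"
    if x: "x \<in> V" and t: "t \<in> cbox 0 1" for x t
  proof -
    let ?q = "p x t"
    have q: "?q \<in> V" using pV x t by blast
    have dp: "((\<lambda>x. p x t) has_derivative (\<lambda>h. t *\<^sub>R h)) (at x within V)"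
      unfolding p_def by (auto intro!: derivative_eq_intros)
    have dwi: "((\<lambda>x. w i (p x t)) has_derivative (\<lambda>h. \<Sum>j\<in>UNIV. D i j ?q * (t *\<^sub>R h) $ j)) (at x within V)" for i
      using has_derivative_compose[OF dp dw[of ?q i]] q V_def by simp
    have dn: "((\<lambda>x. (x - a) $ i) has_derivative (\<lambda>h. h $ i)) (at x within V)" for i
    proof -
      have "((\<lambda>x. x - a) has_derivative (\<lambda>h. h)) (at x within V)"
        by (auto intro!: derivative_eq_intros)
      from bounded_linear.has_derivative[OF bounded_linear_vec_nth[of i] this] show ?thesis .
    qed
    have "((\<lambda>x. f x t) has_derivative (\<lambda>h. \<Sum>i\<in>UNIV. w i ?q * h $ i + (\<Sum>j\<in>UNIV. D i j ?q * (t *\<^sub>R h) $ j) * (x - a) $ i)) (at x within V)"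
      unfolding f_def by (intro has_derivative_sum has_derivative_mult dwi dn)
    moreover have "(\<lambda>h. \<Sum>i\<in>UNIV. w i ?q * h $ i + (\<Sum>j\<in>UNIV. D i j ?q * (t *\<^sub>R h) $ j) * (x - a) $ i)
        = blinfun_apply (fx x t)"
    proof
      fix h :: "real^'n"
      have "(\<Sum>i\<in>UNIV. w i ?q * h $ i + (\<Sum>j\<in>UNIV. D i j ?q * (t *\<^sub>R h) $ j) * (x - a) $ i)
          = (\<Sum>i\<in>UNIV. w i ?q * h $ i) + (\<Sum>i\<in>UNIV. \<Sum>j\<in>UNIV. t * D i j ?q * (x - a) $ i * h $ j)"
        by (simp add: sum.distrib sum_distrib_left sum_distrib_right mult_ac del: vector_minus_component)
      also have "\<dots> = (\<Sum>i\<in>UNIV. w i ?q * h $ i) + (\<Sum>j\<in>UNIV. \<Sum>i\<in>UNIV. t * D i j ?q * (x - a) $ i * h $ j)"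
        by (subst sum.swap) rule
      also have "\<dots> = (\<Sum>j\<in>UNIV. g j x t * h $ j)"
        by (simp add: g_def sum.distrib sum_distrib_left sum_distrib_right distrib_left distrib_right mult_ac add.commute del: vector_minus_component)
      finally show "(\<Sum>i\<in>UNIV. w i ?q * h $ i + (\<Sum>j\<in>UNIV. D i j ?q * (t *\<^sub>R h) $ j) * (x - a) $ i)
          = blinfun_apply (fx x t) h" by (simp add: fxapp)
    qed
    ultimately show ?thesis by simp
  qed
  have ftc: "integral (cbox 0 1) (g j x) = w j x" if x: "x \<in> V" for j x
  proof -
    have "((\<lambda>t. t * w j (p x t)) has_vector_derivative g j x t) (at t within {0..1})"
      if t: "t \<in> {0..1}" for t
    proof -
      let ?q = "p x t"
      have q: "?q \<in> V" using pV x t by simp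
      have dp: "(p x has_derivative (\<lambda>s. s *\<^sub>R (x - a))) (at t within {0..1})"
        unfolding p_def by (auto intro!: derivative_eq_intros)
      have dwj: "((\<lambda>t. w j (p x t)) has_derivative (\<lambda>s. \<Sum>k\<in>UNIV. D j k ?q * (s *\<^sub>R (x - a)) $ k)) (at t within {0..1})"
        using has_derivative_compose[OF dp dw[of ?q j]] q V_def by simp
      have "((\<lambda>t. t * w j (p x t)) has_derivative (\<lambda>s. t * (\<Sum>k\<in>UNIV. D j k ?q * (s *\<^sub>R (x - a)) $ k) + s * w j ?q)) (at t within {0..1})"
        by (intro has_derivative_mult dwj derivative_intros)
      moreover have "(\<lambda>s. t * (\<Sum>k\<in>UNIV. D j k ?q * (s *\<^sub>R (x - a)) $ k) + s * w j ?q) = (\<lambda>s. s *\<^sub>R g j x t)"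
        using sym q unfolding V_def
        by (auto simp: g_def sum_distrib_left algebra_simps intro!: sum.cong)
      ultimately show ?thesis by (simp add: has_vector_derivative_def)
    qed
    from fundamental_theorem_of_calculus[OF _ this]
    have "(g j x has_integral (1 * w j (p x 1) - 0 * w j (p x 0))) {0..1}" by simp
    then show ?thesis by (simp add: p_def integral_unique)
  qed
  define u where "u x = integral (cbox 0 1) (f x)" for x
  have "(u has_derivative (\<lambda>h. \<Sum>j\<in>UNIV. w j y * h $ j)) (at y)" if y: "y \<in> V" for y
  proof -
    have "(u has_derivative blinfun_apply (integral (cbox 0 1) (fx y))) (at y within V)"
      unfolding u_def
      by (rule leibniz_rule[OF dfx integrable_continuous[OF cf1] cfx y convex_ball[of a r, folded V_def]])
    moreover have "(fx y has_integral (\<Sum>j\<in>UNIV. integral (cbox 0 1) (g j y) *\<^sub>R B j)) (cbox 0 1)"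
      unfolding fx_def
      by (intro has_integral_sum finite has_integral_scaleR_left integrable_integral
          integrable_continuous cg1 y)
    then have "integral (cbox 0 1) (fx y) = (\<Sum>j\<in>UNIV. w j y *\<^sub>R B j)"
      using ftc y by (simp add: integral_unique)
    ultimately have "(u has_derivative blinfun_apply (\<Sum>j\<in>UNIV. w j y *\<^sub>R B j)) (at y)"
      using at_within_open[OF y] V_def by simp
    moreover have "blinfun_apply (\<Sum>j\<in>UNIV. w j y *\<^sub>R B j) = (\<lambda>h. \<Sum>j\<in>UNIV. w j y * h $ j)"
      by (rule ext) (simp add: blinfun.bilinear_simps Bapp)
    ultimately show ?thesis by simp
  qed
  then show ?thesis unfolding V_def by blast
qed



lemma sum_axis: "(\<Sum>k\<in>UNIV. c k * (axis j (1::real)) $ k) = (c j :: real)"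
  by (simp add: axis_def if_distrib sum.delta sum.delta' cong: if_cong)

theorem mainTheorem14:
  fixes b q :: "real^'n \<Rightarrow> real"
    and lam mu gam :: "'n \<Rightarrow> real^'n \<Rightarrow> real"
    and U :: "(real^'n) set"
  assumes U: "open U"
    and sb: "smooth_on U b" and sq: "smooth_on U q"
    and slam: "\<forall>i. smooth_on U (lam i)" and smu: "\<forall>i. smooth_on U (mu i)"
    and sgam: "\<forall>i. smooth_on U (gam i)"
    and mu_nz: "\<forall>i. \<forall>x\<in>U. mu i x \<noteq> 0"
    and hq: "\<forall>i. \<forall>x\<in>U. partial q i x = lam i x / mu i x * partial b i x"
    and E_nz: "\<forall>i j. i \<noteq> j \<longrightarrow> (\<forall>x\<in>U. Ecoef b q lam mu gam i j x \<noteq> 0)"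
    and hlam: "\<forall>i j. i \<noteq> j \<longrightarrow> (\<forall>x\<in>U.
                 partial (lam i) j x = (lam j x - lam i x) * Kcoef b q lam mu gam i j x)"
    and hmu: "\<forall>i j. i \<noteq> j \<longrightarrow> (\<forall>x\<in>U.
                 partial (mu i) j x = (mu j x - mu i x) * Kcoef b q lam mu gam i j x)"
    and hgam: "\<forall>i j. i \<noteq> j \<longrightarrow> (\<forall>x\<in>U.
                 partial (gam i) j x = (gam j x - gam i x) * Kcoef b q lam mu gam i j x)"
    and hb: "\<forall>i j. i \<noteq> j \<longrightarrow> (\<forall>x\<in>U.
                 partial (partial b i) j x =
                   (lam i x * (1 + mu j x / mu i x) - lam j x * (1 + mu i x / mu j x))
                     / Ecoef b q lam mu gam i j x * partial b i x * partial b j x)"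
  shows "let c = (\<lambda>i x. gam i x + b x * lam i x - q x * mu i x);
             phi = (\<lambda>i x. lam i x / mu i x)
         in (\<forall>i j. i \<noteq> j \<longrightarrow> (\<forall>x\<in>U. partial (c i) j x = 0))
          \<and> (\<forall>i j. i \<noteq> j \<longrightarrow> (\<forall>x\<in>U. Ecoef b q lam mu gam i j x = c i x - c j x))
          \<and> (\<forall>x\<in>U. \<exists>V u. open V \<and> x \<in> V \<and> V \<subseteq> U \<and> smooth_on V u
                 \<and> (\<forall>i. \<forall>y\<in>V. partial u i y = mu i y * partial b i y)
                 \<and> (\<forall>i j. i \<noteq> j \<longrightarrow> (\<forall>y\<in>V.
                      partial (phi i) j y = (phi j y - phi i y)^2 / (c j y - c i y) * partial u j y
                    \<and> partial (partial u i) j y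
                        = 2 * (phi j y - phi i y) / (c j y - c i y) * partial u i y * partial u j y)))"
proof -
  define c where "c = (\<lambda>i x. gam i x + b x * lam i x - q x * mu i x)"
  define phi where "phi = (\<lambda>i x. lam i x / mu i x)"
  define E where "E = Ecoef b q lam mu gam"
  have db: "\<And>x. x \<in> U \<Longrightarrow> b differentiable (at x)" using smooth_diff_at sb U by blast
  have dq: "\<And>x. x \<in> U \<Longrightarrow> q differentiable (at x)" using smooth_diff_at sq U by blast
  have dl: "\<And>i x. x \<in> U \<Longrightarrow> lam i differentiable (at x)" using smooth_diff_at slam U by blast
  have dm: "\<And>i x. x \<in> U \<Longrightarrow> mu i differentiable (at x)" using smooth_diff_at smu U by blast
  have dg: "\<And>i x. x \<in> U \<Longrightarrow> gam i differentiable (at x)" using smooth_diff_at sgam U by blast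
  have sbi: "\<And>i. smooth_on U (partial b i)" using smooth_partial sb by blast
  have dbi: "\<And>i x. x \<in> U \<Longrightarrow> partial b i differentiable (at x)" using smooth_diff_at sbi U by blast
  have Enz: "\<And>i j x. i \<noteq> j \<Longrightarrow> x \<in> U \<Longrightarrow> E i j x \<noteq> 0" using E_nz E_def by blast
  have item1: "\<forall>i j. i \<noteq> j \<longrightarrow> (\<forall>x\<in>U. partial (c i) j x = 0)"
  proof (intro allI impI ballI)
    fix i j :: 'n and x assume ij: "i \<noteq> j" and x: "x \<in> U"
    have "(c i has_derivative (\<lambda>h. (\<Sum>k\<in>UNIV. partial (gam i) k x * h $ k)
        + (b x * (\<Sum>k\<in>UNIV. partial (lam i) k x * h $ k) + (\<Sum>k\<in>UNIV. partial b k x * h $ k) * lam i x)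
        - (q x * (\<Sum>k\<in>UNIV. partial (mu i) k x * h $ k) + (\<Sum>k\<in>UNIV. partial q k x * h $ k) * mu i x))) (at x)"
      unfolding c_def
      by (intro has_derivative_diff has_derivative_add has_derivative_mult has_derivative_partials
          db dq dl dm dg x)
    from partial_has[OF this, of j]
    have "partial (c i) j x = partial (gam i) j x + (b x * partial (lam i) j x + partial b j x * lam i x)
        - (q x * partial (mu i) j x + partial q j x * mu i x)"
      by (simp add: sum_axis)
    also have "\<dots> = 0"
    proof -
      define K where "K = (lam i x - lam j x * mu i x / mu j x) / E i j x * partial b j x"
      have g: "partial (gam i) j x = (gam j x - gam i x) * K"
        using hgam ij x unfolding Kcoef_def E_def K_def by blast
      have l: "partial (lam i) j x = (lam j x - lam i x) * K"
        using hlam ij x unfolding Kcoef_def E_def K_def by blast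
      have m: "partial (mu i) j x = (mu j x - mu i x) * K"
        using hmu ij x unfolding Kcoef_def E_def K_def by blast
      have qq: "partial q j x = lam j x / mu j x * partial b j x" using hq x by blast
      have EE: "E i j x = q x * (mu j x - mu i x) + b x * (lam i x - lam j x) + gam i x - gam j x"
        unfolding E_def Ecoef_def ..
      have "(gam j x - gam i x) * K + (b x * ((lam j x - lam i x) * K) + partial b j x * lam i x)
         - (q x * ((mu j x - mu i x) * K) + lam j x / mu j x * partial b j x * mu i x) = 0"
        unfolding K_def by (rule alg1[OF Enz[OF ij x] EE])
      then show ?thesis unfolding g l m qq .
    qed
    finally show "partial (c i) j x = 0" .
  qed
  have item2: "\<forall>i j. i \<noteq> j \<longrightarrow> (\<forall>x\<in>U. Ecoef b q lam mu gam i j x = c i x - c j x)"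
    by (simp add: Ecoef_def c_def algebra_simps)
  have Eswap: "\<And>i j x. E j i x = - E i j x" by (simp add: E_def Ecoef_def algebra_simps)
  have cE: "\<And>i j x. c j x - c i x = - E i j x" by (simp add: E_def Ecoef_def c_def algebra_simps)
  define w where "w i y = mu i y * partial b i y" for i y
  have sw: "\<And>i. smooth_on U (w i)" unfolding w_def[abs_def]
    using smooth_mult[OF U] smu sbi by blast
  have dw: "\<And>i x. x \<in> U \<Longrightarrow> w i differentiable (at x)" using smooth_diff_at sw U by blast
  have Dform: "partial (w i) j y = 2 * (mu i y * mu j y) * (lam i y / mu i y - lam j y / mu j y) / E i j y
      * partial b i y * partial b j y" if ij: "i \<noteq> j" and y: "y \<in> U" for i j y
  proof -
    have "partial (w i) j y = partial (mu i) j y * partial b i y + mu i y * partial (partial b i) j y"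
      unfolding w_def[abs_def] by (rule partial_mult[OF dm[OF y] dbi[OF y]])
    also have "\<dots> = 2 * (mu i y * mu j y) * (lam i y / mu i y - lam j y / mu j y) / E i j y
      * partial b i y * partial b j y"
    proof -
      define K where "K = (lam i y - lam j y * mu i y / mu j y) / E i j y * partial b j y"
      have m: "partial (mu i) j y = (mu j y - mu i y) * K"
        using hmu ij y unfolding Kcoef_def E_def K_def by blast
      have bb: "partial (partial b i) j y = (lam i y * (1 + mu j y / mu i y) - lam j y * (1 + mu i y / mu j y))
                     / E i j y * partial b i y * partial b j y"
        using hb ij y unfolding E_def by blast
      show ?thesis unfolding m bb K_def
        by (rule alg2) (use mu_nz y Enz[OF ij y] in auto)
    qed
    finally show ?thesis .
  qed
  have item3: "\<forall>x\<in>U. \<exists>V u. open V \<and> x \<in> V \<and> V \<subseteq> U \<and> smooth_on V u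
                 \<and> (\<forall>i. \<forall>y\<in>V. partial u i y = mu i y * partial b i y)
                 \<and> (\<forall>i j. i \<noteq> j \<longrightarrow> (\<forall>y\<in>V.
                      partial (phi i) j y = (phi j y - phi i y)^2 / (c j y - c i y) * partial u j y
                    \<and> partial (partial u i) j y
                        = 2 * (phi j y - phi i y) / (c j y - c i y) * partial u i y * partial u j y))"
  proof
    fix x assume x: "x \<in> U"
    obtain r where r: "r > 0" "ball x r \<subseteq> U" using U x open_contains_ball by blast
    define V where "V = ball x r"
    have V: "open V" "x \<in> V" "V \<subseteq> U" using r by (auto simp: V_def)
    have "\<exists>u. \<forall>y\<in>ball x r. (u has_derivative (\<lambda>h. \<Sum>j\<in>UNIV. w j y * h $ j)) (at y)"
    proof (rule poincare_ball)
      fix i y assume "y \<in> ball x r"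
      then show "(w i has_derivative (\<lambda>h. \<Sum>j\<in>UNIV. partial (w i) j y * h $ j)) (at y)"
        using has_derivative_partials dw r by blast
    next
      fix i j
      have "smooth_on U (partial (w i) j)" using smooth_partial sw by blast
      then have "partial (w i) j differentiable_on U" unfolding smooth_on_def
        by (metis iter_partial.simps(1))
      then show "continuous_on (ball x r) (partial (w i) j)"
        using differentiable_imp_continuous_on continuous_on_subset r by blast
    next
      fix i j y assume "y \<in> ball x r"
      then have y: "y \<in> U" using r by blast
      show "partial (w i) j y = partial (w j) i y"
      proof (cases "i = j")
        case False
        have d2: "partial (w j) i y = 2 * (mu j y * mu i y) * (lam j y / mu j y - lam i y / mu i y) / E j i y
            * partial b j y * partial b i y" using Dform[of j i y] False y by metis
        have "partial (w i) j y = 2 * (mu i y * mu j y) * (lam i y / mu i y - lam j y / mu j y) / E i j y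
            * partial b i y * partial b j y" by (rule Dform[OF False y])
        also have "\<dots> = 2 * (mu j y * mu i y) * (lam j y / mu j y - lam i y / mu i y) / (- E i j y)
            * partial b j y * partial b i y"
          by (rule alg5) (use mu_nz y Enz[OF False y] in auto)
        also have "\<dots> = partial (w j) i y" using d2 unfolding Eswap[of i j y] by simp
        finally show ?thesis .
      qed simp
    qed
    then obtain u where du: "\<And>y. y \<in> V \<Longrightarrow> (u has_derivative (\<lambda>h. \<Sum>j\<in>UNIV. w j y * h $ j)) (at y)"
      unfolding V_def by blast
    have pu: "partial u i y = w i y" if "y \<in> V" for i y
      using partial_has[OF du[OF that], of i] by (simp add: sum_axis)
    have smV: "smooth_on V u" unfolding smooth_on_def
    proof
      fix "is" :: "'n list"
      show "iter_partial is u differentiable_on V"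
      proof (cases "is" rule: rev_exhaust)
        case Nil
        have "\<forall>y\<in>V. u differentiable (at y)" using du differentiable_def by blast
        then have "u differentiable_on V"
          by (simp add: differentiable_on_eq_differentiable_at[OF V(1)])
        then show ?thesis using Nil by simp
      next
        case (snoc js i)
        have "iter_partial js (w i) differentiable_on V"
          using smooth_subset[OF sw V(3)] unfolding smooth_on_def by blast
        moreover have "\<forall>z\<in>V. iter_partial js (w i) z = iter_partial js (partial u i) z"
          by (rule iter_partial_cong[OF V(1)]) (use pu in auto)
        ultimately have "iter_partial js (partial u i) differentiable_on V"
          using diff_on_cong[OF V(1)] by blast
        then show ?thesis using snoc by (simp add: iter_partial_snoc)
      qed
    qed
    have formulas: "partial (phi i) j y = (phi j y - phi i y)^2 / (c j y - c i y) * partial u j y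
                    \<and> partial (partial u i) j y
                        = 2 * (phi j y - phi i y) / (c j y - c i y) * partial u i y * partial u j y"
      if ij: "i \<noteq> j" and yV: "y \<in> V" for i j y
    proof
      have y: "y \<in> U" using yV V by blast
      have mi: "mu i y \<noteq> 0" and mj: "mu j y \<noteq> 0" using mu_nz y by auto
      define K where "K = (lam i y - lam j y * mu i y / mu j y) / E i j y * partial b j y"
      have l: "partial (lam i) j y = (lam j y - lam i y) * K"
        using hlam ij y unfolding Kcoef_def E_def K_def by blast
      have m: "partial (mu i) j y = (mu j y - mu i y) * K"
        using hmu ij y unfolding Kcoef_def E_def K_def by blast
      have c1: "c j y - c i y = - E i j y" by (rule cE)
      have uj: "partial u j y = mu j y * partial b j y" using pu[OF yV] w_def by simp
      have ui: "partial u i y = mu i y * partial b i y" using pu[OF yV] w_def by simp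
      have "partial (phi i) j y = (partial (lam i) j y * mu i y - lam i y * partial (mu i) j y) / (mu i y)^2"
        unfolding phi_def by (rule partial_divide[OF dl[OF y] dm[OF y] mi])
      also have "\<dots> = (((lam j y - lam i y) * K) * mu i y - lam i y * ((mu j y - mu i y) * K)) / (mu i y)^2"
        unfolding l m ..
      also have "\<dots> = (lam j y / mu j y - lam i y / mu i y)^2 / (- E i j y) * (mu j y * partial b j y)"
        unfolding K_def by (rule alg3[OF mi mj Enz[OF ij y]])
      also have "\<dots> = (phi j y - phi i y)^2 / (c j y - c i y) * partial u j y"
        unfolding c1 uj phi_def ..
      finally show "partial (phi i) j y = (phi j y - phi i y)^2 / (c j y - c i y) * partial u j y" .
      have "partial (partial u i) j y = partial (w i) j y"
        by (rule partial_cong[OF V(1) yV]) (use pu in auto)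
      also have "\<dots> = 2 * (mu i y * mu j y) * (lam i y / mu i y - lam j y / mu j y) / E i j y
          * partial b i y * partial b j y" by (rule Dform[OF ij y])
      also have "\<dots> = 2 * (lam j y / mu j y - lam i y / mu i y) / (- E i j y) * (mu i y * partial b i y) * (mu j y * partial b j y)"
        by (rule alg4[OF mi mj Enz[OF ij y]])
      also have "\<dots> = 2 * (phi j y - phi i y) / (c j y - c i y) * partial u i y * partial u j y"
        unfolding c1 uj ui phi_def ..
      finally show "partial (partial u i) j y
                        = 2 * (phi j y - phi i y) / (c j y - c i y) * partial u i y * partial u j y" .
    qed
    show "\<exists>V u. open V \<and> x \<in> V \<and> V \<subseteq> U \<and> smooth_on V u
                 \<and> (\<forall>i. \<forall>y\<in>V. partial u i y = mu i y * partial b i y)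
                 \<and> (\<forall>i j. i \<noteq> j \<longrightarrow> (\<forall>y\<in>V.
                      partial (phi i) j y = (phi j y - phi i y)^2 / (c j y - c i y) * partial u j y
                    \<and> partial (partial u i) j y
                        = 2 * (phi j y - phi i y) / (c j y - c i y) * partial u i y * partial u j y))"
    proof -
      have P1: "\<forall>i. \<forall>y\<in>V. partial u i y = mu i y * partial b i y" using pu w_def by simp
      have P2: "\<forall>i j. i \<noteq> j \<longrightarrow> (\<forall>y\<in>V.
                      partial (phi i) j y = (phi j y - phi i y)^2 / (c j y - c i y) * partial u j y
                    \<and> partial (partial u i) j y
                        = 2 * (phi j y - phi i y) / (c j y - c i y) * partial u i y * partial u j y)"
        by (intro allI impI ballI formulas)
      show ?thesis
        apply (rule exI[where x=V])
        apply (rule exI[where x=u])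
        by (intro conjI V smV P1 P2)
    qed
  qed
  have all: "(\<forall>i j. i \<noteq> j \<longrightarrow> (\<forall>x\<in>U. partial (c i) j x = 0))
          \<and> (\<forall>i j. i \<noteq> j \<longrightarrow> (\<forall>x\<in>U. Ecoef b q lam mu gam i j x = c i x - c j x))
          \<and> (\<forall>x\<in>U. \<exists>V u. open V \<and> x \<in> V \<and> V \<subseteq> U \<and> smooth_on V u
                 \<and> (\<forall>i. \<forall>y\<in>V. partial u i y = mu i y * partial b i y)
                 \<and> (\<forall>i j. i \<noteq> j \<longrightarrow> (\<forall>y\<in>V.
                      partial (phi i) j y = (phi j y - phi i y)^2 / (c j y - c i y) * partial u j y
                    \<and> partial (partial u i) j y
                        = 2 * (phi j y - phi i y) / (c j y - c i y) * partial u i y * partial u j y)))"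
    by (intro conjI item1 item2 item3)
  show ?thesis unfolding Let_def using all unfolding c_def phi_def .
qed


end
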